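(* Assume every $f_i$ ($i=1,\dots,q$) is Lipschitz continuous with respect to the continuous variables, and consider the bound-constrained problem (PB): minimize $F(x)=(f_1(x),\dots,f_q(x))^\top$ subject to $x\in X\cap\mathcal Z$. If $x^\star\in X\cap\mathcal Z$ is Pareto-Clarke-Jahn stationary w.r.t. the continuous variables for (PB), then $x^\star$ is Pareto-Clarke stationary w.r.t. the continuous variables for (PB).
   Context: Fix integers $n,q\ge1$. Let $\{1,\dots,n\}=I^c\cup I^z$ with $I^c\cap I^z=\emptyset$ and $I^c,I^z\neq\emptyset$; for $x\in\mathbb R^n$ write $x_c=(x_i)_{i\in I^c}$, $x_z=(x_i)_{i\in I^z}$. Let $l,u\in\mathbb R^n$ with $l_i<u_i$, and $l_i,u_i\in\mathbb Z$ for $i\in I^z$. $X=\{x: l_i\le x_i\le u_i\ \forall i\}$, $\mathcal Z=\{x: x_i\in\mathbb Z\ \forall i\in I^z\}$. A function $h:\mathbb R^n\to\mathbb R$ is Lipschitz continuous with respect to the continuous variables if there is $L_h$ with $|h(x)-h(y)|\le L_h\|x-y\|$ whenever $x_i=y_i$ for all $i\in I^z$. For such $h$ and $s\in\mathbb R^n$ with $s_i=0$ ($i\in I^z$): $h^{Cl}_c(x;s)=\limsup_{y_c\to x_c,\ y_z=x_z,\ t\downarrow0}\frac{h(y+ts)-h(y)}{t}$, and $\partial_c h(x)=\{v\in\mathbb R^n: v_i=0\ \forall i\in I^z,\ h^{Cl}_c(x;s)\ge s^\top v\ \forall s \text{ with } s_i=0\ \forall i\in I^z\}$. For $x\in X\cap\mathcal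 Z$ and $d\in D^c(x)$, the Clarke-Jahn generalized directional derivative is $h^\circ_c(x;d)=\limsup\frac{h(y+td)-h(y)}{t}$, the limsup taken over $y_c\to x_c$, $y_z=x_z$, $y\in X\cap\mathcal Z$, $t\downarrow0$, $y+td\in X\cap\mathcal Z$. For $x\in X\cap\mathcal Z$, $D^c(x)=\{s\in\mathbb R^n: s_i=0\ (i\in I^z);\ s_i\ge 0\ (i\in I^c,\ x_i=l_i);\ s_i\le 0\ (i\in I^c,\ x_i=u_i);\ s_i\in\mathbb R\ (i\in I^c,\ l_i<x_i<u_i)\}$. A point $x^\star\in X\cap\mathcal Z$ is Pareto-Clarke-Jahn stationary w.r.t. the continuous variables for (PB) if for every $d\in D^c(x^\star)$ there is $j_d\in\{1,\dots,q\}$ with $(f_{j_d})^\circ_c(x^\star;d)\ge0$. It is Pareto-Clarke stationary w.r.t. the continuous variables for (PB) if there exist $\sigma\in\mathbb R^q$, $\sigma\ge0$ componentwise, $\sigma\ne0$, and $\bar\xi\in\sum_{i=1}^q\sigma_i\partial_c f_i(x^\star)$ (Minkowski sum) with $\bar\xi^\top d\ge0$ for all $d\in D^c(x^\star)$. *)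

theory Defs
  imports "HOL-Analysis.Analysis" "HOL-Library.Liminf_Limsup"
begin

text \<open>Vectors in R^n are rendered as real^'n; the index set {1..n} is the finite type 'n.
  Iz is the set of integer indices (I^z).\<close>

definition box_X :: "real^'n \<Rightarrow> real^'n \<Rightarrow> (real^'n) set" where
  "box_X l u = {x. \<forall>i. l$i \<le> x$i \<and> x$i \<le> u$i}"

definition int_Z :: "'n set \<Rightarrow> (real^'n) set" where
  "int_Z Iz = {x. \<forall>i\<in>Iz. x$i \<in> \<int>}"

definition lipschitz_c :: "'n set \<Rightarrow> (real^'n \<Rightarrow> real) \<Rightarrow> bool" where
  "lipschitz_c Iz h \<longleftrightarrow> (\<exists>L. \<forall>x y. (\<forall>i\<in>Iz. x$i = y$i) \<longrightarrow> \<bar>h x - h y\<bar> \<le> L * norm (x - y))"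

definition clarke_c :: "'n set \<Rightarrow> (real^'n \<Rightarrow> real) \<Rightarrow> real^'n \<Rightarrow> real^'n \<Rightarrow> ereal" where
  "clarke_c Iz h x s =
     Limsup (at (x, 0) within {(y, t). (\<forall>i\<in>Iz. y$i = x$i) \<and> t > 0})
            (\<lambda>(y, t). ereal ((h (y + t *\<^sub>R s) - h y) / t))"

definition subdiff_c :: "'n set \<Rightarrow> (real^'n \<Rightarrow> real) \<Rightarrow> real^'n \<Rightarrow> (real^'n) set" where
  "subdiff_c Iz h x = {v. (\<forall>i\<in>Iz. v$i = 0) \<and>
      (\<forall>s. (\<forall>i\<in>Iz. s$i = 0) \<longrightarrow> clarke_c Iz h x s \<ge> ereal (s \<bullet> v))}"

definition clarke_jahn_c :: "'n set \<Rightarrow> real^'n \<Rightarrow> real^'n \<Rightarrow> (real^'n \<Rightarrow> real) \<Rightarrow> real^'n \<Rightarrow> real^'n \<Rightarrow> ereal" where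
  "clarke_jahn_c Iz l u h x d =
     Limsup (at (x, 0) within {(y, t). (\<forall>i\<in>Iz. y$i = x$i) \<and> y \<in> box_X l u \<inter> int_Z Iz \<and> t > 0
                                   \<and> y + t *\<^sub>R d \<in> box_X l u \<inter> int_Z Iz})
            (\<lambda>(y, t). ereal ((h (y + t *\<^sub>R d) - h y) / t))"

definition dirs_c :: "'n set \<Rightarrow> real^'n \<Rightarrow> real^'n \<Rightarrow> real^'n \<Rightarrow> (real^'n) set" where
  "dirs_c Iz l u x = {s. (\<forall>i\<in>Iz. s$i = 0) \<and>
      (\<forall>i. i \<notin> Iz \<longrightarrow> x$i = l$i \<longrightarrow> s$i \<ge> 0) \<and>
      (\<forall>i. i \<notin> Iz \<longrightarrow> x$i = u$i \<longrightarrow> s$i \<le> 0)}"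

definition pareto_clarke_jahn_stationary_c ::
  "'n set \<Rightarrow> real^'n \<Rightarrow> real^'n \<Rightarrow> nat \<Rightarrow> (nat \<Rightarrow> real^'n \<Rightarrow> real) \<Rightarrow> real^'n \<Rightarrow> bool" where
  "pareto_clarke_jahn_stationary_c Iz l u q f xs \<longleftrightarrow>
     xs \<in> box_X l u \<inter> int_Z Iz \<and>
     (\<forall>d\<in>dirs_c Iz l u xs. \<exists>j\<in>{1..q}. clarke_jahn_c Iz l u (f j) xs d \<ge> 0)"

definition minkowski_sum_scaled :: "nat \<Rightarrow> (nat \<Rightarrow> real) \<Rightarrow> (nat \<Rightarrow> (real^'n) set) \<Rightarrow> (real^'n) set" where
  "minkowski_sum_scaled q \<sigma> A = {(\<Sum>i\<in>{1..q}. \<sigma> i *\<^sub>R v i) | v. \<forall>i\<in>{1..q}. v i \<in> A i}"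

definition pareto_clarke_stationary_c ::
  "'n set \<Rightarrow> real^'n \<Rightarrow> real^'n \<Rightarrow> nat \<Rightarrow> (nat \<Rightarrow> real^'n \<Rightarrow> real) \<Rightarrow> real^'n \<Rightarrow> bool" where
  "pareto_clarke_stationary_c Iz l u q f xs \<longleftrightarrow>
     xs \<in> box_X l u \<inter> int_Z Iz \<and>
     (\<exists>\<sigma>::nat \<Rightarrow> real. (\<forall>i\<in>{1..q}. \<sigma> i \<ge> 0) \<and> (\<exists>i\<in>{1..q}. \<sigma> i \<noteq> 0) \<and>
        (\<exists>\<xi> \<in> minkowski_sum_scaled q \<sigma> (\<lambda>i. subdiff_c Iz (f i) xs).
            \<forall>d\<in>dirs_c Iz l u xs. \<xi> \<bullet> d \<ge> 0))"

end

theory Submission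
  imports Defs
begin



lemma eps_le0:
  fixes a k :: real
  assumes "\<And>e. e > 0 \<Longrightarrow> a \<le> k * e"
  shows "a \<le> 0"
proof (rule ccontr)
  assume "\<not> a \<le> 0"
  hence a: "a > 0" by simp
  define e where "e = a / (2 * \<bar>k\<bar> + 1)"
  have e: "e > 0" using a by (simp add: e_def add_pos_nonneg)
  have "k * e \<le> \<bar>k\<bar> * e" using e by (simp add: mult_right_mono)
  also have "\<bar>k\<bar> * e < a"
  proof -
    have "\<bar>k\<bar> * a < (2 * \<bar>k\<bar> + 1) * a" using a by (simp add: mult_strict_right_mono)
    thus ?thesis unfolding e_def by (simp add: field_simps add_pos_nonneg)
  qed
  finally show False using assms[OF e] by simp
qed

lemma sep_main:
  fixes f g :: "'a::euclidean_space \<Rightarrow> real" and C :: "'a set"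
  assumes fc: "convex_on UNIV f" and gc: "concave_on C g" and C0: "0 \<in> C"
    and f0: "f 0 = 0" and g0: "g 0 = 0" and le: "\<forall>x\<in>C. g x \<le> f x"
  shows "\<exists>z. (\<forall>x. z \<bullet> x \<le> f x) \<and> (\<forall>x\<in>C. g x \<le> z \<bullet> x)"
proof -
  define A where "A = {(x, r::real). f x < r}"
  define B where "B = {(x, r::real). x \<in> C \<and> r < g x}"
  have cA: "convex A"
    unfolding convex_def A_def
  proof (clarsimp)
    fix x r y s and u v :: real
    assume "f x < r" "f y < s" "0 \<le> u" "0 \<le> v" "u + v = 1"
    have "f (u *\<^sub>R x + v *\<^sub>R y) \<le> u * f x + v * f y"
      using fc \<open>0 \<le> u\<close> \<open>0 \<le> v\<close> \<open>u + v = 1\<close> unfolding convex_on_def by auto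
    also have "u * f x + v * f y < u * r + v * s"
    proof (cases "u = 0")
      case True thus ?thesis using \<open>u + v = 1\<close> \<open>f y < s\<close> by simp
    next
      case False
      hence "u * f x < u * r" using \<open>0 \<le> u\<close> \<open>f x < r\<close> by simp
      moreover have "v * f y \<le> v * s" using \<open>0 \<le> v\<close> \<open>f y < s\<close> by (simp add: mult_left_mono)
      ultimately show ?thesis by simp
    qed
    finally show "f (u *\<^sub>R x + v *\<^sub>R y) < u * r + v * s" .
  qed
  have cC: "convex C" using gc unfolding concave_on_def convex_on_def by auto
  have cB: "convex B"
    unfolding convex_def B_def
  proof (clarsimp)
    fix x r y s and u v :: real
    assume "x \<in> C" "y \<in> C" "r < g x" "s < g y" "0 \<le> u" "0 \<le> v" "u + v = 1"
    have "u *\<^sub>R x + v *\<^sub>R y \<in> C" using cC \<open>x \<in> C\<close> \<open>y \<in> C\<close> \<open>0 \<le> u\<close> \<open>0 \<le> v\<close> \<open>u + v = 1\<close>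
      unfolding convex_def by auto
    moreover
    have "- g (u *\<^sub>R x + v *\<^sub>R y) \<le> u * (- g x) + v * (- g y)"
      using gc \<open>x \<in> C\<close> \<open>y \<in> C\<close> \<open>0 \<le> u\<close> \<open>0 \<le> v\<close> \<open>u + v = 1\<close>
      unfolding concave_on_def convex_on_def by blast
    hence "u * g x + v * g y \<le> g (u *\<^sub>R x + v *\<^sub>R y)" by simp
    moreover have "u * r + v * s < u * g x + v * g y"
    proof (cases "u = 0")
      case True thus ?thesis using \<open>u + v = 1\<close> \<open>s < g y\<close> by simp
    next
      case False
      hence "u * r < u * g x" using \<open>0 \<le> u\<close> \<open>r < g x\<close> by simp
      moreover have "v * s \<le> v * g y" using \<open>0 \<le> v\<close> \<open>s < g y\<close> by (simp add: mult_left_mono)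
      ultimately show ?thesis by simp
    qed
    ultimately show "u *\<^sub>R x + v *\<^sub>R y \<in> C \<and> u * r + v * s < g (u *\<^sub>R x + v *\<^sub>R y)" by simp
  qed
  have nA: "A \<noteq> {}" using f0 unfolding A_def by (metis (mono_tags) case_prod_conv empty_iff mem_Collect_eq zero_less_one)
  have nB: "B \<noteq> {}" using g0 C0 unfolding B_def by (metis (mono_tags) case_prod_conv empty_iff mem_Collect_eq neg_less_0_iff_less zero_less_one)
  have dAB: "A \<inter> B = {}" using le unfolding A_def B_def by fastforce
  obtain a b where ab: "a \<noteq> 0" "\<forall>p\<in>A. a \<bullet> p \<le> b" "\<forall>p\<in>B. a \<bullet> p \<ge> b"
    using separating_hyperplane_sets[OF cA cB nA nB dAB] by blast
  obtain w c where wc: "a = (w, c)" by (cases a)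
  have hA: "w \<bullet> x + c * r \<le> b" if "f x < r" for x r
    using ab(2) that unfolding A_def wc by (force simp: inner_Pair)
  have hB: "w \<bullet> x + c * r \<ge> b" if "x \<in> C" "r < g x" for x r
    using ab(3) that unfolding B_def wc by (force simp: inner_Pair)
  have cb1: "c * e \<le> b" if "e > 0" for e using hA[of 0 e] f0 that by simp
  have cb2: "- c * e \<ge> b" if "e > 0" for e using hB[of 0 "-e"] g0 C0 that by simp
  have cneg: "c < 0"
  proof (rule ccontr)
    assume "\<not> c < 0"
    hence c0: "c \<ge> 0" by simp
    show False
    proof (cases "c = 0")
      case True
      hence "w \<bullet> x \<le> b" for x using hA[of x "f x + 1"] by simp
      moreover have "b \<le> 0" using cb2[of 1] True by simp
      ultimately have "w \<bullet> w \<le> 0" by (meson order_trans)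
      hence "w = 0" by (meson inner_ge_zero antisym inner_eq_zero_iff)
      thus False using ab(1) wc True by (simp add: zero_prod_def)
    next
      case False
      hence "c > 0" using c0 by simp
      thus False using cb1[of 1] cb2[of 1] by simp
    qed
  qed
  define z where "z = (1 / (- c)) *\<^sub>R w"
  have z1: "z \<bullet> x \<le> f x" for x
  proof -
    have "w \<bullet> x + c * f x \<le> (-2 * c) * e" if "e > 0" for e
      using hA[of x "f x + e"] cb2[OF that] that by (simp add: algebra_simps)
    hence "w \<bullet> x + c * f x \<le> 0" by (rule eps_le0)
    thus ?thesis using cneg unfolding z_def by (simp add: field_simps)
  qed
  have z2: "g x \<le> z \<bullet> x" if "x \<in> C" for x
  proof -
    have "- (w \<bullet> x + c * g x) \<le> (-2 * c) * e" if "e > 0" for e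
      using hB[OF \<open>x \<in> C\<close>, of "g x - e"] cb1[OF that] that by (simp add: algebra_simps)
    hence "- (w \<bullet> x + c * g x) \<le> 0" by (rule eps_le0)
    thus ?thesis using cneg unfolding z_def by (simp add: field_simps)
  qed
  show ?thesis using z1 z2 by blast
qed





lemma convex_on_sum_fun:
  fixes h :: "'j \<Rightarrow> 'a::real_vector \<Rightarrow> real"
  assumes "finite J" "convex S" "\<forall>j\<in>J. convex_on S (h j)"
  shows "convex_on S (\<lambda>x. \<Sum>j\<in>J. h j x)"
  using assms
proof (induction J rule: finite_induct)
  case empty thus ?case by (simp add: convex_on_const)
next
  case (insert j J)
  thus ?case by (simp add: convex_on_add)
qed

lemma sum_split:
  fixes h :: "'j \<Rightarrow> 'a::euclidean_space \<Rightarrow> real"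
  assumes "finite J" "\<forall>j\<in>J. convex_on UNIV (h j) \<and> h j 0 = 0" "\<forall>x. z \<bullet> x \<le> (\<Sum>j\<in>J. h j x)"
  shows "\<exists>v. (\<forall>j\<in>J. \<forall>x. v j \<bullet> x \<le> h j x) \<and> (\<Sum>j\<in>J. v j) = z"
  using assms
proof (induction J arbitrary: z rule: finite_induct)
  case empty
  hence "z \<bullet> z \<le> 0" by simp
  hence "z = 0" by (meson inner_ge_zero antisym inner_eq_zero_iff)
  thus ?case by simp
next
  case (insert j J)
  have cJ: "convex_on UNIV (\<lambda>x. \<Sum>i\<in>J. h i x)"
    using insert by (intro convex_on_sum_fun) auto
  have lin: "convex_on UNIV (\<lambda>x. - (z \<bullet> x))"
    by (simp add: convex_on_def inner_add_right algebra_simps)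
  have gc: "concave_on UNIV (\<lambda>x. z \<bullet> x - (\<Sum>i\<in>J. h i x))"
    unfolding concave_on_def using convex_on_add[OF lin cJ] by (simp add: algebra_simps)
  have "\<exists>u. (\<forall>x. u \<bullet> x \<le> h j x) \<and> (\<forall>x\<in>UNIV. z \<bullet> x - (\<Sum>i\<in>J. h i x) \<le> u \<bullet> x)"
  proof (rule sep_main)
    show "convex_on UNIV (h j)" using insert by simp
    show "h j 0 = 0" using insert by simp
    show "z \<bullet> 0 - (\<Sum>i\<in>J. h i 0) = 0" using insert by simp
    show "\<forall>x\<in>UNIV. z \<bullet> x - (\<Sum>i\<in>J. h i x) \<le> h j x" using insert by (simp add: algebra_simps)
  qed (use gc in auto)
  then obtain u where u1: "\<forall>x. u \<bullet> x \<le> h j x" and u2: "\<forall>x. z \<bullet> x - (\<Sum>i\<in>J. h i x) \<le> u \<bullet> x"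
    by blast
  have zu: "\<forall>x. (z - u) \<bullet> x \<le> (\<Sum>i\<in>J. h i x)" using u2 by (simp add: inner_diff_left algebra_simps)
  have "\<forall>j\<in>J. convex_on UNIV (h j) \<and> h j 0 = 0" using insert.prems by simp
  from insert.IH[OF this zu] obtain v where v: "\<forall>i\<in>J. \<forall>x. v i \<bullet> x \<le> h i x" "(\<Sum>i\<in>J. v i) = z - u"
    by blast
  define v' where "v' = v(j := u)"
  have s1: "(\<Sum>i\<in>J. v' i) = (\<Sum>i\<in>J. v i)" using insert.hyps(2) unfolding v'_def by (intro sum.cong) auto
  have "(\<Sum>i\<in>insert j J. v' i) = v' j + (\<Sum>i\<in>J. v' i)" by (rule sum.insert[OF insert.hyps])
  hence "(\<Sum>i\<in>insert j J. v' i) = u + (\<Sum>i\<in>J. v i)" using s1 unfolding v'_def by simp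
  hence "(\<Sum>i\<in>insert j J. v' i) = z" using v(2) by simp
  moreover have "\<forall>i\<in>insert j J. \<forall>x. v' i \<bullet> x \<le> h i x"
    using v(1) u1 insert.hyps unfolding v'_def by auto
  ultimately show ?case by blast
qed




lemma gordan2:
  fixes a b :: "'a::real_vector \<Rightarrow> real"
  assumes ca: "convex_on D a" and cb: "convex_on D b" and ne: "D \<noteq> {}"
    and h: "\<forall>d\<in>D. a d \<ge> 0 \<or> b d \<ge> 0"
  shows "\<exists>w1 w2. w1 \<ge> 0 \<and> w2 \<ge> 0 \<and> (w1 \<noteq> 0 \<or> w2 \<noteq> 0) \<and> (\<forall>d\<in>D. w1 * a d + w2 * b d \<ge> 0)"
proof -
  have cD: "convex D" using ca by (simp add: convex_on_def)
  define S where "S = {(\<alpha>::real, \<beta>::real). \<exists>d\<in>D. a d < \<alpha> \<and> b d < \<beta>}"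
  define T where "T = {(\<alpha>::real, \<beta>::real). \<alpha> \<le> 0 \<and> \<beta> \<le> 0}"
  have lt: "u * p + v * q < u * r + v * s" if "p < r" "q < s" "0 \<le> u" "0 \<le> v" "u + v = 1"
    for p q r s u v :: real
  proof (cases "u = 0")
    case True thus ?thesis using that by simp
  next
    case False
    hence "u * p < u * r" using that by simp
    moreover have "v * q \<le> v * s" using that by (simp add: mult_left_mono)
    ultimately show ?thesis by simp
  qed
  have cS: "convex S"
    unfolding convex_def S_def
  proof (clarsimp)
    fix x1 y1 x2 y2 u v :: real and d1 d2
    assume "d1 \<in> D" "a d1 < x1" "b d1 < y1" "d2 \<in> D" "a d2 < x2" "b d2 < y2" "0 \<le> u" "0 \<le> v" "u + v = 1"
    note H = this
    have "u *\<^sub>R d1 + v *\<^sub>R d2 \<in> D" using cD H unfolding convex_def by auto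
    moreover have "a (u *\<^sub>R d1 + v *\<^sub>R d2) < u * x1 + v * x2"
    proof -
      have "a (u *\<^sub>R d1 + v *\<^sub>R d2) \<le> u * a d1 + v * a d2"
        using ca H unfolding convex_on_def by blast
      also have "\<dots> < u * x1 + v * x2" by (rule lt) (use H in auto)
      finally show ?thesis .
    qed
    moreover have "b (u *\<^sub>R d1 + v *\<^sub>R d2) < u * y1 + v * y2"
    proof -
      have "b (u *\<^sub>R d1 + v *\<^sub>R d2) \<le> u * b d1 + v * b d2"
        using cb H unfolding convex_on_def by blast
      also have "\<dots> < u * y1 + v * y2" by (rule lt) (use H in auto)
      finally show ?thesis .
    qed
    ultimately show "\<exists>d\<in>D. a d < u * x1 + v * x2 \<and> b d < u * y1 + v * y2" by blast
  qed
  have cT: "convex T" unfolding convex_def T_def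
  proof (clarsimp)
    fix x1 y1 x2 y2 u v :: real
    assume H: "x1 \<le> 0" "y1 \<le> 0" "x2 \<le> 0" "y2 \<le> 0" "0 \<le> u" "0 \<le> v"
    show "u * x1 + v * x2 \<le> 0 \<and> u * y1 + v * y2 \<le> 0"
      using H by (simp add: add_nonpos_nonpos mult_nonneg_nonpos)
  qed
  obtain d0 where d0: "d0 \<in> D" using ne by blast
  have nS: "S \<noteq> {}"
  proof -
    have "(a d0 + 1, b d0 + 1) \<in> S" unfolding S_def using d0 by force
    thus ?thesis by blast
  qed
  have nT: "T \<noteq> {}" unfolding T_def by auto
  have dST: "S \<inter> T = {}"
  proof (rule ccontr)
    assume "S \<inter> T \<noteq> {}"
    then obtain x y where "(x, y) \<in> S" "(x, y) \<in> T" by auto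
    then obtain d where "d \<in> D" "a d < x" "b d < y" "x \<le> 0" "y \<le> 0" unfolding S_def T_def by auto
    thus False using h by force
  qed
  obtain w c where wc: "w \<noteq> 0" "\<forall>x\<in>S. w \<bullet> x \<le> c" "\<forall>x\<in>T. w \<bullet> x \<ge> c"
    using separating_hyperplane_sets[OF cS cT nS nT dST] by blast
  obtain w1 w2 where w: "w = (w1, w2)" by (cases w)
  have Tc: "w1 * \<alpha> + w2 * \<beta> \<ge> c" if "\<alpha> \<le> 0" "\<beta> \<le> 0" for \<alpha> \<beta>
  proof -
    have "(\<alpha>, \<beta>) \<in> T" unfolding T_def using that by simp
    hence "c \<le> (w1, w2) \<bullet> (\<alpha>, \<beta>)" using wc(3) unfolding w by blast
    thus ?thesis by (simp add: inner_Pair inner_real_def)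
  qed
  have Sc: "w1 * \<alpha> + w2 * \<beta> \<le> c" if "d \<in> D" "a d < \<alpha>" "b d < \<beta>" for d \<alpha> \<beta>
  proof -
    have "(\<alpha>, \<beta>) \<in> S" unfolding S_def using that by blast
    hence "(w1, w2) \<bullet> (\<alpha>, \<beta>) \<le> c" using wc(2) unfolding w by blast
    thus ?thesis by (simp add: inner_Pair inner_real_def)
  qed
  have c0: "c \<le> 0" using Tc[of 0 0] by simp
  have w1: "w1 \<le> 0"
  proof (rule ccontr)
    assume "\<not> w1 \<le> 0"
    hence p: "w1 > 0" by simp
    have "w1 * (- ((\<bar>c\<bar> + 1) / w1)) + w2 * 0 \<ge> c" by (rule Tc) (use p in \<open>auto simp: divide_nonneg_pos\<close>)
    moreover have "0 \<le> w * (c + \<bar>c\<bar>)" if "w > 0" for w using that by simp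
    ultimately show False using p by (simp add: field_simps) (smt (verit) distrib_left mult.commute)
  qed
  have w2: "w2 \<le> 0"
  proof (rule ccontr)
    assume "\<not> w2 \<le> 0"
    hence p: "w2 > 0" by simp
    have "w1 * 0 + w2 * (- ((\<bar>c\<bar> + 1) / w2)) \<ge> c" by (rule Tc) (use p in \<open>auto simp: divide_nonneg_pos\<close>)
    moreover have "0 \<le> w * (c + \<bar>c\<bar>)" if "w > 0" for w using that by simp
    ultimately show False using p by (simp add: field_simps) (smt (verit) distrib_left mult.commute)
  qed
  have "(- w1) * a d + (- w2) * b d \<ge> 0" if "d \<in> D" for d
  proof -
    have "w1 * a d + w2 * b d \<le> (- (w1 + w2)) * e" if "e > 0" for e
      using Sc[OF \<open>d \<in> D\<close>, of "a d + e" "b d + e"] c0 that by (simp add: algebra_simps)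
    hence "w1 * a d + w2 * b d \<le> 0" by (rule eps_le0)
    thus ?thesis by simp
  qed
  moreover have "- w1 \<noteq> 0 \<or> - w2 \<noteq> 0" using wc(1) w by (auto simp: zero_prod_def)
  ultimately show ?thesis using w1 w2 by (intro exI[of _ "- w1"] exI[of _ "- w2"]) auto
qed


lemma gordan:
  fixes p :: "nat \<Rightarrow> 'a::real_vector \<Rightarrow> real"
  assumes "k \<ge> 1" "\<forall>j\<in>{1..k}. convex_on D (p j)" "convex D" "\<forall>d\<in>D. \<exists>j\<in>{1..k}. p j d \<ge> 0"
  shows "\<exists>\<sigma>. (\<forall>j\<in>{1..k}. \<sigma> j \<ge> 0) \<and> (\<exists>j\<in>{1..k}. \<sigma> j \<noteq> 0) \<and> (\<forall>d\<in>D. (\<Sum>j=1..k. \<sigma> j * p j d) \<ge> 0)"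
  using assms
proof (induction k arbitrary: D)
  case 0 thus ?case by simp
next
  case (Suc k)
  show ?case
  proof (cases "k = 0")
    case True
    have "\<forall>d\<in>D. p 1 d \<ge> 0" using Suc.prems True by auto
    thus ?thesis using True by (intro exI[of _ "\<lambda>_. 1"]) auto
  next
    case False
    hence k1: "k \<ge> 1" by simp
    define D' where "D' = {d\<in>D. p (Suc k) d < 0}"
    have cpk: "convex_on D (p (Suc k))" using Suc.prems by simp
    have cD': "convex D'"
      unfolding convex_def D'_def
    proof (clarsimp)
      fix x y and u v :: real
      assume H: "x \<in> D" "p (Suc k) x < 0" "y \<in> D" "p (Suc k) y < 0" "0 \<le> u" "0 \<le> v" "u + v = 1"
      have m: "u *\<^sub>R x + v *\<^sub>R y \<in> D" using Suc.prems(3) H unfolding convex_def by blast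
      have "p (Suc k) (u *\<^sub>R x + v *\<^sub>R y) \<le> u * p (Suc k) x + v * p (Suc k) y"
        using cpk H unfolding convex_on_def by blast
      also have "\<dots> < 0"
      proof (cases "u = 0")
        case True thus ?thesis using H by simp
      next
        case False
        hence "u * p (Suc k) x < 0" using H by (simp add: mult_pos_neg)
        moreover have "v * p (Suc k) y \<le> 0" using H by (simp add: mult_nonneg_nonpos)
        ultimately show ?thesis by simp
      qed
      finally show "u *\<^sub>R x + v *\<^sub>R y \<in> D \<and> p (Suc k) (u *\<^sub>R x + v *\<^sub>R y) < 0" using m by simp
    qed
    have "\<forall>j\<in>{1..k}. convex_on D' (p j)"
      using Suc.prems(2) cD' by (auto intro: convex_on_subset simp: D'_def)
    moreover have "\<forall>d\<in>D'. \<exists>j\<in>{1..k}. p j d \<ge> 0"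
    proof
      fix d assume d: "d \<in> D'"
      then obtain j where j: "j \<in> {1..Suc k}" "p j d \<ge> 0" using Suc.prems(4) unfolding D'_def by blast
      have "j \<noteq> Suc k" using d j unfolding D'_def by auto
      thus "\<exists>j\<in>{1..k}. p j d \<ge> 0" using j by auto
    qed
    ultimately obtain \<sigma>' where s': "\<forall>j\<in>{1..k}. \<sigma>' j \<ge> 0" "\<exists>j\<in>{1..k}. \<sigma>' j \<noteq> 0"
        "\<forall>d\<in>D'. (\<Sum>j=1..k. \<sigma>' j * p j d) \<ge> 0"
      using Suc.IH[OF k1 _ cD'] by blast
    define q where "q d = (\<Sum>j=1..k. \<sigma>' j * p j d)" for d
    show ?thesis
    proof (cases "D = {}")
      case True thus ?thesis by (intro exI[of _ "\<lambda>_. 1"]) auto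
    next
      case ne: False
      have cq: "convex_on D q" unfolding q_def
        using Suc.prems(2,3) s'(1) by (intro convex_on_sum_fun convex_on_cmul) auto
      have "\<forall>d\<in>D. q d \<ge> 0 \<or> p (Suc k) d \<ge> 0"
        using s'(3) unfolding q_def D'_def by force
      then obtain w1 w2 where w: "w1 \<ge> 0" "w2 \<ge> 0" "w1 \<noteq> 0 \<or> w2 \<noteq> 0"
          "\<forall>d\<in>D. w1 * q d + w2 * p (Suc k) d \<ge> 0"
        using gordan2[OF cq cpk ne] by blast
      define \<sigma> where "\<sigma> j = (if j = Suc k then w2 else w1 * \<sigma>' j)" for j
      have sum: "(\<Sum>j=1..Suc k. \<sigma> j * p j d) = w1 * q d + w2 * p (Suc k) d" for d
      proof -
        have "(\<Sum>j=1..k. \<sigma> j * p j d) = (\<Sum>j=1..k. w1 * (\<sigma>' j * p j d))"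
          unfolding \<sigma>_def by (intro sum.cong) auto
        also have "\<dots> = w1 * q d" unfolding q_def by (simp add: sum_distrib_left)
        finally show ?thesis by (simp add: \<sigma>_def)
      qed
      have "\<forall>j\<in>{1..Suc k}. \<sigma> j \<ge> 0" using w(1,2) s'(1) unfolding \<sigma>_def by auto
      moreover have "\<exists>j\<in>{1..Suc k}. \<sigma> j \<noteq> 0"
      proof (cases "w2 = 0")
        case True
        hence "w1 \<noteq> 0" using w(3) by simp
        then obtain j where "j \<in> {1..k}" "\<sigma>' j \<noteq> 0" using s'(2) by blast
        thus ?thesis using \<open>w1 \<noteq> 0\<close> unfolding \<sigma>_def by (intro bexI[of _ j]) auto
      next
        case False thus ?thesis unfolding \<sigma>_def by (intro bexI[of _ "Suc k"]) auto
      qed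
      ultimately show ?thesis using w(4) sum by auto
    qed
  qed
qed




lemma Limsup_le_realI:
  fixes \<phi> :: "'b \<Rightarrow> real"
  assumes "\<And>y. y > c \<Longrightarrow> eventually (\<lambda>z. \<phi> z < y) G"
  shows "Limsup G (\<lambda>z. ereal (\<phi> z)) \<le> ereal c"
  unfolding Limsup_le_iff
proof (intro allI impI)
  fix y :: ereal assume "ereal c < y"
  then obtain r where r: "c < r" "ereal r < y"
    by (meson dense ereal_dense2 ereal_less(2) less_ereal.simps(1) order.strict_trans)
  show "\<forall>\<^sub>F z in G. ereal (\<phi> z) < y"
    using assms[OF r(1)] by eventually_elim (metis less_ereal.simps(1) order.strict_trans r(2))
qed

lemma Limsup_lt_realD:
  fixes \<phi> :: "'b \<Rightarrow> real"
  assumes "Limsup G (\<lambda>z. ereal (\<phi> z)) < ereal y"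
  shows "eventually (\<lambda>z. \<phi> z < y) G"
  using Limsup_lessD[OF assms] by simp

definition cS :: "'n set \<Rightarrow> real^'n \<Rightarrow> ((real^'n) \<times> real) set" where
  "cS Iz x = {(y, t). (\<forall>i\<in>Iz. y$i = x$i) \<and> t > 0}"

definition cF :: "'n set \<Rightarrow> real^'n \<Rightarrow> ((real^'n) \<times> real) filter" where
  "cF Iz x = at (x, 0) within cS Iz x"

definition cQ :: "(real^'n \<Rightarrow> real) \<Rightarrow> real^'n \<Rightarrow> (real^'n) \<times> real \<Rightarrow> real" where
  "cQ h s z = (h (fst z + snd z *\<^sub>R s) - h (fst z)) / snd z"

lemma clarke_c_eq: "clarke_c Iz h x s = Limsup (cF Iz x) (\<lambda>z. ereal (cQ h s z))"
  unfolding clarke_c_def cF_def cS_def cQ_def case_prod_unfold by simp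

lemma cF_ne: "cF Iz x \<noteq> bot"
proof -
  have "(x, 0) islimpt cS Iz x"
    unfolding islimpt_approachable
  proof (intro allI impI)
    fix e :: real assume e: "e > 0"
    have "(x, e/2) \<in> cS Iz x" using e unfolding cS_def by simp
    moreover have "dist (x, e/2) (x, 0::real) < e" using e by (simp add: dist_Pair_Pair)
    moreover have "(x, e/2) \<noteq> (x, 0::real)" using e by simp
    ultimately show "\<exists>x'\<in>cS Iz x. x' \<noteq> (x, 0) \<and> dist x' (x, 0) < e" by blast
  qed
  thus ?thesis unfolding cF_def using trivial_limit_within by blast
qed

lemma cF_in: "eventually (\<lambda>z. z \<in> cS Iz x) (cF Iz x)"
  unfolding cF_def eventually_at_filter by simp

lemma cF_self:
  assumes "(T \<longlongrightarrow> (x, 0)) (cF Iz x)" "\<And>z. z \<in> cS Iz x \<Longrightarrow> T z \<in> cS Iz x"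
  shows "filterlim T (cF Iz x) (cF Iz x)"
  unfolding cF_def
proof (rule filterlim_at_withinI)
  show "(T \<longlongrightarrow> (x, 0)) (at (x, 0) within cS Iz x)" using assms(1) unfolding cF_def .
  have "eventually (\<lambda>z. z \<in> cS Iz x) (cF Iz x)" by (rule cF_in)
  thus "\<forall>\<^sub>F z in at (x, 0) within cS Iz x. T z \<in> cS Iz x - {(x, 0)}"
    unfolding cF_def by eventually_elim (use assms(2) in \<open>auto simp: cS_def\<close>)
qed

lemma cQ_bound:
  assumes L: "\<forall>x y. (\<forall>i\<in>Iz. x$i = y$i) \<longrightarrow> \<bar>h x - h y\<bar> \<le> L * norm (x - y)"
    and s: "\<forall>i\<in>Iz. s$i = 0" and z: "z \<in> cS Iz x"
  shows "\<bar>cQ h s z\<bar> \<le> L * norm s"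
proof -
  obtain y t where yt: "z = (y, t)" by (cases z)
  have t: "t > 0" using z yt unfolding cS_def by simp
  have "\<forall>i\<in>Iz. (y + t *\<^sub>R s)$i = y$i" using s by simp
  hence "\<bar>h (y + t *\<^sub>R s) - h y\<bar> \<le> L * norm (y + t *\<^sub>R s - y)"
    using L by blast
  also have "\<dots> = t * (L * norm s)" using t by simp
  finally have "\<bar>h (y + t *\<^sub>R s) - h y\<bar> / t \<le> L * norm s" using t by (simp add: field_simps)
  thus ?thesis unfolding cQ_def yt using t by simp
qed


definition cr :: "'n set \<Rightarrow> (real^'n \<Rightarrow> real) \<Rightarrow> real^'n \<Rightarrow> real^'n \<Rightarrow> real" where
  "cr Iz h x s = real_of_ereal (clarke_c Iz h x s)"

lemma clarke_fin:
  fixes h :: "real^'n \<Rightarrow> real" and x :: "real^'n"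
  assumes L: "\<forall>x y. (\<forall>i\<in>Iz. x$i = y$i) \<longrightarrow> \<bar>h x - h y\<bar> \<le> L * norm (x - y)"
    and s: "\<forall>i\<in>Iz. s$i = 0"
  shows "clarke_c Iz h x s = ereal (cr Iz h x s)" "\<bar>cr Iz h x s\<bar> \<le> L * norm s"
proof -
  have ev: "eventually (\<lambda>z. \<bar>cQ h s z\<bar> \<le> L * norm s) (cF Iz x)"
    using cF_in by (rule eventually_mono) (use cQ_bound[OF L s] in blast)
  have up: "clarke_c Iz h x s \<le> ereal (L * norm s)"
    unfolding clarke_c_eq
    by (rule Limsup_bounded) (use ev in \<open>eventually_elim, auto\<close>)
  have lo: "ereal (- (L * norm s)) \<le> clarke_c Iz h x s"
    unfolding clarke_c_eq
    by (rule le_Limsup[OF cF_ne]) (use ev in \<open>eventually_elim, auto\<close>)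
  have fin: "\<bar>clarke_c Iz h x s\<bar> \<noteq> \<infinity>" using up lo by auto
  show e: "clarke_c Iz h x s = ereal (cr Iz h x s)" unfolding cr_def using ereal_real'[OF fin] by simp
  show "\<bar>cr Iz h x s\<bar> \<le> L * norm s" using up lo unfolding e by auto
qed

lemma clarke_zero: "cr Iz h x 0 = 0"
proof -
  have "clarke_c Iz h x 0 = Limsup (cF Iz x) (\<lambda>z. ereal 0)" unfolding clarke_c_eq cQ_def by simp
  also have "\<dots> = 0" using Limsup_const[OF cF_ne, of Iz x "ereal 0"] by (simp add: zero_ereal_def)
  finally show ?thesis unfolding cr_def by simp
qed

lemma clarke_ev:
  assumes "clarke_c Iz h x s = ereal c" "c < y"
  shows "eventually (\<lambda>z. cQ h s z < y) (cF Iz x)"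
  by (rule Limsup_lt_realD) (use assms in \<open>simp add: clarke_c_eq[symmetric]\<close>)

lemma clarke_subadd:
  fixes h :: "real^'n \<Rightarrow> real" and x :: "real^'n"
  assumes L: "\<forall>x y. (\<forall>i\<in>Iz. x$i = y$i) \<longrightarrow> \<bar>h x - h y\<bar> \<le> L * norm (x - y)"
    and s1: "\<forall>i\<in>Iz. s1$i = 0" and s2: "\<forall>i\<in>Iz. s2$i = 0"
  shows "cr Iz h x (s1 + s2) \<le> cr Iz h x s1 + cr Iz h x s2"
proof -
  have s12: "\<forall>i\<in>Iz. (s1 + s2)$i = 0" using s1 s2 by simp
  note e1 = clarke_fin(1)[OF L s1, of x] and e2 = clarke_fin(1)[OF L s2, of x]
    and e12 = clarke_fin(1)[OF L s12, of x]
  define T where "T z = (fst z + snd z *\<^sub>R s1, snd z)" for z :: "(real^'n) \<times> real"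
  have Tl: "filterlim T (cF Iz x) (cF Iz x)"
  proof (rule cF_self)
    have "((\<lambda>z. (fst z + snd z *\<^sub>R s1, snd z)) \<longlongrightarrow>
        (fst (x, 0::real) + snd (x, 0::real) *\<^sub>R s1, snd (x, 0::real))) (cF Iz x)"
      unfolding cF_def by (intro tendsto_intros)
    thus "(T \<longlongrightarrow> (x, 0)) (cF Iz x)" unfolding T_def by simp
    show "T z \<in> cS Iz x" if "z \<in> cS Iz x" for z
      using that s1 unfolding T_def cS_def by auto
  qed
  have "ereal (cr Iz h x (s1 + s2)) \<le> ereal (cr Iz h x s1 + cr Iz h x s2)"
    unfolding e12[symmetric] clarke_c_eq
  proof (rule Limsup_le_realI)
    fix y assume y: "y > cr Iz h x s1 + cr Iz h x s2"
    define e where "e = (y - cr Iz h x s1 - cr Iz h x s2) / 2"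
    have ep: "e > 0" using y unfolding e_def by simp
    have ev1: "eventually (\<lambda>z. cQ h s1 z < cr Iz h x s1 + e) (cF Iz x)"
      by (rule clarke_ev[OF e1]) (use ep in simp)
    have "eventually (\<lambda>z. cQ h s2 z < cr Iz h x s2 + e) (cF Iz x)"
      by (rule clarke_ev[OF e2]) (use ep in simp)
    hence ev2: "eventually (\<lambda>z. cQ h s2 (T z) < cr Iz h x s2 + e) (cF Iz x)"
      using Tl by (rule eventually_compose_filterlim)
    show "eventually (\<lambda>z. cQ h (s1 + s2) z < y) (cF Iz x)"
      using ev1 ev2 cF_in
    proof eventually_elim
      case (elim z)
      obtain w t where z: "z = (w, t)" by (cases z)
      have t: "t > 0" using elim(3) unfolding z cS_def by simp
      have "cQ h (s1 + s2) z = cQ h s2 (T z) + cQ h s1 z"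
        unfolding cQ_def T_def z using t by (simp add: field_simps scaleR_add_right add.assoc)
      thus ?case using elim(1,2) unfolding e_def by (smt (verit) field_sum_of_halves)
    qed
  qed
  thus ?thesis by simp
qed

lemma clarke_hom:
  fixes h :: "real^'n \<Rightarrow> real" and x :: "real^'n"
  assumes L: "\<forall>x y. (\<forall>i\<in>Iz. x$i = y$i) \<longrightarrow> \<bar>h x - h y\<bar> \<le> L * norm (x - y)"
    and s: "\<forall>i\<in>Iz. s$i = 0" and c: "c > 0"
  shows "cr Iz h x (c *\<^sub>R s) \<le> c * cr Iz h x s"
proof -
  have cs: "\<forall>i\<in>Iz. (c *\<^sub>R s)$i = 0" using s by simp
  note e1 = clarke_fin(1)[OF L s, of x] and e2 = clarke_fin(1)[OF L cs, of x]
  define T where "T z = (fst z, c * snd z)" for z :: "(real^'n) \<times> real"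
  have Tl: "filterlim T (cF Iz x) (cF Iz x)"
  proof (rule cF_self)
    have "((\<lambda>z. (fst z, c * snd z)) \<longlongrightarrow> (fst (x, 0::real), c * snd (x, 0::real))) (cF Iz x)"
      unfolding cF_def by (intro tendsto_intros)
    thus "(T \<longlongrightarrow> (x, 0)) (cF Iz x)" unfolding T_def by simp
    show "T z \<in> cS Iz x" if "z \<in> cS Iz x" for z
      using that c unfolding T_def cS_def by auto
  qed
  have "ereal (cr Iz h x (c *\<^sub>R s)) \<le> ereal (c * cr Iz h x s)"
    unfolding e2[symmetric] clarke_c_eq
  proof (rule Limsup_le_realI)
    fix y assume y: "y > c * cr Iz h x s"
    have "eventually (\<lambda>z. cQ h s z < y / c) (cF Iz x)"
      by (rule clarke_ev[OF e1]) (use y c in \<open>simp add: field_simps\<close>)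
    hence ev: "eventually (\<lambda>z. cQ h s (T z) < y / c) (cF Iz x)"
      using Tl by (rule eventually_compose_filterlim)
    show "eventually (\<lambda>z. cQ h (c *\<^sub>R s) z < y) (cF Iz x)"
      using ev cF_in
    proof eventually_elim
      case (elim z)
      obtain w t where z: "z = (w, t)" by (cases z)
      have t: "t > 0" using elim(2) unfolding z cS_def by simp
      have "cQ h (c *\<^sub>R s) z = c * cQ h s (T z)"
        unfolding cQ_def T_def z using t c by (simp add: field_simps)
      thus ?case using elim(1) c by (simp add: field_simps)
    qed
  qed
  thus ?thesis by simp
qed

lemma cj_le:
  fixes h :: "real^'n \<Rightarrow> real" and x :: "real^'n"
  assumes L: "\<forall>x y. (\<forall>i\<in>Iz. x$i = y$i) \<longrightarrow> \<bar>h x - h y\<bar> \<le> L * norm (x - y)"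
    and d: "\<forall>i\<in>Iz. d$i = 0"
  shows "clarke_jahn_c Iz l u h x d \<le> ereal (cr Iz h x d)"
proof -
  define S' where "S' = {(y, t). (\<forall>i\<in>Iz. y$i = x$i) \<and> y \<in> box_X l u \<inter> int_Z Iz \<and> t > 0
                                   \<and> y + t *\<^sub>R d \<in> box_X l u \<inter> int_Z Iz}"
  have sub: "S' \<subseteq> cS Iz x" unfolding S'_def cS_def by auto
  have eq: "clarke_jahn_c Iz l u h x d = Limsup (at (x, 0) within S') (\<lambda>z. ereal (cQ h d z))"
    unfolding clarke_jahn_c_def S'_def cQ_def case_prod_unfold by simp
  note e = clarke_fin(1)[OF L d, of x]
  show ?thesis unfolding eq
  proof (rule Limsup_le_realI)
    fix y assume "y > cr Iz h x d"
    hence "eventually (\<lambda>z. cQ h d z < y) (cF Iz x)" by (rule clarke_ev[OF e])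
    thus "eventually (\<lambda>z. cQ h d z < y) (at (x, 0) within S')"
      using filter_leD[OF at_le[OF sub]] unfolding cF_def by blast
  qed
qed




lemma sublin_convex:
  fixes g :: "'a::real_vector \<Rightarrow> real"
  assumes sa: "\<And>a b. g (a + b) \<le> g a + g b" and hm: "\<And>c a. c \<ge> 0 \<Longrightarrow> g (c *\<^sub>R a) \<le> c * g a"
  shows "convex_on UNIV g"
  unfolding convex_on_def
proof (intro conjI convex_UNIV ballI allI impI)
  fix x y and u v :: real assume "0 \<le> u" "0 \<le> v" "u + v = 1"
  have "g (u *\<^sub>R x + v *\<^sub>R y) \<le> g (u *\<^sub>R x) + g (v *\<^sub>R y)" by (rule sa)
  also have "\<dots> \<le> u * g x + v * g y" using hm[OF \<open>0 \<le> u\<close>, of x] hm[OF \<open>0 \<le> v\<close>, of y] by simp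
  finally show "g (u *\<^sub>R x + v *\<^sub>R y) \<le> u * g x + v * g y" .
qed

definition Pz :: "'n set \<Rightarrow> real^'n \<Rightarrow> real^'n" where
  "Pz Iz s = (\<chi> i. if i \<in> Iz then 0 else s$i)"

lemma Pz_add: "Pz Iz (a + b) = Pz Iz a + Pz Iz b" unfolding Pz_def by (simp add: vec_eq_iff)
lemma Pz_scale: "Pz Iz (c *\<^sub>R a) = c *\<^sub>R Pz Iz a" unfolding Pz_def by (simp add: vec_eq_iff)
lemma Pz_V: "\<forall>i\<in>Iz. Pz Iz s $ i = 0" unfolding Pz_def by simp
lemma Pz_id: "\<forall>i\<in>Iz. s$i = 0 \<Longrightarrow> Pz Iz s = s" unfolding Pz_def by (simp add: vec_eq_iff)
lemma Pz_zero: "Pz Iz 0 = 0" unfolding Pz_def by (simp add: vec_eq_iff)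

lemma clarke_hom0:
  fixes h :: "real^'n \<Rightarrow> real" and x :: "real^'n"
  assumes L: "\<forall>x y. (\<forall>i\<in>Iz. x$i = y$i) \<longrightarrow> \<bar>h x - h y\<bar> \<le> L * norm (x - y)"
    and s: "\<forall>i\<in>Iz. s$i = 0" and c: "c \<ge> 0"
  shows "cr Iz h x (c *\<^sub>R s) \<le> c * cr Iz h x s"
proof (cases "c = 0")
  case True thus ?thesis by (simp add: clarke_zero)
next
  case False thus ?thesis using clarke_hom[OF L s] c by simp
qed

definition pj :: "'n set \<Rightarrow> (real^'n \<Rightarrow> real) \<Rightarrow> real^'n \<Rightarrow> real^'n \<Rightarrow> real" where
  "pj Iz h x s = cr Iz h x (Pz Iz s)"

lemma pj_props:
  fixes h :: "real^'n \<Rightarrow> real" and x :: "real^'n"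
  assumes L: "\<forall>x y. (\<forall>i\<in>Iz. x$i = y$i) \<longrightarrow> \<bar>h x - h y\<bar> \<le> L * norm (x - y)"
  shows "pj Iz h x (a + b) \<le> pj Iz h x a + pj Iz h x b"
    and "c \<ge> 0 \<Longrightarrow> pj Iz h x (c *\<^sub>R a) \<le> c * pj Iz h x a"
    and "pj Iz h x 0 = 0"
    and "convex_on UNIV (pj Iz h x)"
    and "convex_on UNIV (\<lambda>s. pj Iz h x (- s))"
proof -
  show sa: "pj Iz h x (a + b) \<le> pj Iz h x a + pj Iz h x b" for a b
    unfolding pj_def Pz_add by (rule clarke_subadd[OF L Pz_V Pz_V])
  show hm: "c \<ge> 0 \<Longrightarrow> pj Iz h x (c *\<^sub>R a) \<le> c * pj Iz h x a" for c a
    unfolding pj_def Pz_scale by (rule clarke_hom0[OF L Pz_V])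
  show "pj Iz h x 0 = 0" unfolding pj_def Pz_zero by (rule clarke_zero)
  show "convex_on UNIV (pj Iz h x)" by (rule sublin_convex[OF sa hm])
  show "convex_on UNIV (\<lambda>s. pj Iz h x (- s))"
  proof (rule sublin_convex)
    show "pj Iz h x (- (a + b)) \<le> pj Iz h x (- a) + pj Iz h x (- b)" for a b
      using sa[of "- a" "- b"] by simp
    show "pj Iz h x (- (c *\<^sub>R a)) \<le> c * pj Iz h x (- a)" if "c \<ge> 0" for c a
      using hm[OF that, of "- a"] by simp
  qed
qed

lemma pj_subdiff:
  fixes h :: "real^'n \<Rightarrow> real" and x :: "real^'n"
  assumes L: "\<forall>x y. (\<forall>i\<in>Iz. x$i = y$i) \<longrightarrow> \<bar>h x - h y\<bar> \<le> L * norm (x - y)"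
    and w: "\<forall>s. w \<bullet> s \<le> pj Iz h x s"
  shows "w \<in> subdiff_c Iz h x"
  unfolding subdiff_c_def
proof (intro CollectI conjI ballI allI impI)
  fix i assume i: "i \<in> Iz"
  have "Pz Iz (axis i 1) = 0" "Pz Iz (- axis i 1) = 0"
    using i by (auto simp: Pz_def axis_def vec_eq_iff)
  hence z: "pj Iz h x (axis i 1) = 0" "pj Iz h x (- axis i 1) = 0"
    unfolding pj_def by (simp_all add: clarke_zero)
  have "w $ i \<le> 0" using w[rule_format, of "axis i 1"] z by (simp add: inner_axis)
  moreover have "- (w $ i) \<le> 0" using w[rule_format, of "- axis i 1"] z by (simp add: inner_axis)
  ultimately show "w $ i = 0" by simp
next
  fix s :: "real^'n" assume s: "\<forall>i\<in>Iz. s$i = 0"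
  have "w \<bullet> s \<le> cr Iz h x s" using w[rule_format, of s] Pz_id[OF s] unfolding pj_def by simp
  thus "ereal (s \<bullet> w) \<le> clarke_c Iz h x s" using clarke_fin(1)[OF L s, of x] by (simp add: inner_commute)
qed




lemma dirs_convex:
  fixes Iz :: "'n::finite set" and l u x :: "real^'n"
  shows "convex (dirs_c Iz l u x)"
  unfolding convex_def dirs_c_def
  by (clarsimp simp: add_nonneg_nonneg add_nonpos_nonpos mult_nonneg_nonneg mult_nonneg_nonpos)

lemma dirs_zero: "0 \<in> dirs_c Iz l u x" unfolding dirs_c_def by simp

theorem mainTheorem3:
  fixes Ic Iz :: "'n::finite set"
    and l u xs :: "real^'n"
    and q :: nat
    and f :: "nat \<Rightarrow> real^'n \<Rightarrow> real"
  assumes "q \<ge> 1"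
    and "Ic \<union> Iz = UNIV" and "Ic \<inter> Iz = {}" and "Ic \<noteq> {}" and "Iz \<noteq> {}"
    and "\<forall>i. l$i < u$i"
    and "\<forall>i\<in>Iz. l$i \<in> \<int> \<and> u$i \<in> \<int>"
    and "\<forall>i\<in>{1..q}. lipschitz_c Iz (f i)"
    and "xs \<in> box_X l u \<inter> int_Z Iz"
    and "pareto_clarke_jahn_stationary_c Iz l u q f xs"
  shows "pareto_clarke_stationary_c Iz l u q f xs"
proof -
  note q1 = assms(1) and lip = assms(8) and xs = assms(9) and st = assms(10)
  define D where "D = dirs_c Iz l u xs"
  from lip obtain Lf where Lf: "\<forall>j\<in>{1..q}. \<forall>x y. (\<forall>i\<in>Iz. x$i = y$i) \<longrightarrow> \<bar>f j x - f j y\<bar> \<le> Lf j * norm (x - y)"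
    unfolding lipschitz_c_def by metis
  define p where "p j = pj Iz (f j) xs" for j
  have pp: "p j (a + b) \<le> p j a + p j b" "c \<ge> 0 \<Longrightarrow> p j (c *\<^sub>R a) \<le> c * p j a" "p j 0 = 0"
    "convex_on UNIV (p j)" "convex_on UNIV (\<lambda>s. p j (- s))"
    if "j \<in> {1..q}" for j a b c
    unfolding p_def using pj_props[OF bspec[OF Lf that]] by auto
  have pD: "p j d \<ge> 0" if j: "j \<in> {1..q}" and d: "d \<in> D" and cj: "clarke_jahn_c Iz l u (f j) xs d \<ge> 0" for j d
  proof -
    have dV: "\<forall>i\<in>Iz. d$i = 0" using d unfolding D_def dirs_c_def by simp
    have "clarke_jahn_c Iz l u (f j) xs d \<le> ereal (cr Iz (f j) xs d)"
      by (rule cj_le[OF bspec[OF Lf j] dV])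
    hence "0 \<le> cr Iz (f j) xs d" using cj by (metis ereal_less_eq(5) order_trans zero_ereal_def)
    thus ?thesis unfolding p_def pj_def Pz_id[OF dV] .
  qed
  have cD: "convex D" unfolding D_def by (rule dirs_convex)
  have "\<forall>d\<in>D. \<exists>j\<in>{1..q}. p j d \<ge> 0"
    using st pD unfolding pareto_clarke_jahn_stationary_c_def D_def by blast
  moreover have "\<forall>j\<in>{1..q}. convex_on D (p j)"
    using pp(4) cD by (meson convex_on_subset subset_UNIV)
  ultimately obtain \<sigma> where s: "\<forall>j\<in>{1..q}. \<sigma> j \<ge> 0" "\<exists>j\<in>{1..q}. \<sigma> j \<noteq> 0"
      "\<forall>d\<in>D. (\<Sum>j=1..q. \<sigma> j * p j d) \<ge> 0"
    using gordan[OF q1 _ cD] by blast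
  define \<psi> where "\<psi> s = (\<Sum>j=1..q. \<sigma> j * p j s)" for s
  have c\<psi>: "convex_on UNIV \<psi>" unfolding \<psi>_def
    using s(1) pp(4) by (intro convex_on_sum_fun convex_on_cmul) auto
  have "\<exists>z. (\<forall>x. z \<bullet> x \<le> \<psi> x) \<and> (\<forall>x\<in>D. 0 \<le> z \<bullet> x)"
  proof (rule sep_main[OF c\<psi>])
    show "concave_on D (\<lambda>x. 0)" using cD by (simp add: concave_on_const)
    show "0 \<in> D" unfolding D_def by (rule dirs_zero)
    show "\<psi> 0 = 0" unfolding \<psi>_def using pp(3) by simp
    show "\<forall>x\<in>D. 0 \<le> \<psi> x" using s(3) unfolding \<psi>_def by simp
  qed simp
  then obtain \<zeta> where z: "\<forall>x. \<zeta> \<bullet> x \<le> \<psi> x" "\<forall>x\<in>D. 0 \<le> \<zeta> \<bullet> x" by blast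
  have "\<exists>v. (\<forall>j\<in>{1..q}. \<forall>x. v j \<bullet> x \<le> \<sigma> j * p j x) \<and> (\<Sum>j\<in>{1..q}. v j) = \<zeta>"
    by (rule sum_split) (use s(1) pp(3,4) z(1) in \<open>auto simp: \<psi>_def intro!: convex_on_cmul\<close>)
  then obtain v where v: "\<forall>j\<in>{1..q}. \<forall>x. v j \<bullet> x \<le> \<sigma> j * p j x" "(\<Sum>j\<in>{1..q}. v j) = \<zeta>" by blast
  have "\<exists>w. \<forall>x. w \<bullet> x \<le> p j x" if j: "j \<in> {1..q}" for j
  proof -
    have "\<exists>w. (\<forall>x. w \<bullet> x \<le> p j x) \<and> (\<forall>x\<in>UNIV. - p j (- x) \<le> w \<bullet> x)"
    proof (rule sep_main)
      show "convex_on UNIV (p j)" using pp(4)[OF j] .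
      show "concave_on UNIV (\<lambda>x. - p j (- x))" unfolding concave_on_def using pp(5)[OF j] by simp
      show "p j 0 = 0" using pp(3)[OF j] .
      show "- p j (- 0) = 0" using pp(3)[OF j] by simp
      show "\<forall>x\<in>UNIV. - p j (- x) \<le> p j x"
      proof
        fix x :: "real^'n"
        have "p j (x + - x) \<le> p j x + p j (- x)" by (rule pp(1)[OF j])
        thus "- p j (- x) \<le> p j x" using pp(3)[OF j] by simp
      qed
    qed simp
    thus ?thesis by blast
  qed
  then obtain w0 where w0: "\<forall>j\<in>{1..q}. \<forall>x. w0 j \<bullet> x \<le> p j x" by metis
  define vv where "vv j = (if \<sigma> j = 0 then w0 j else (1 / \<sigma> j) *\<^sub>R v j)" for j
  have vvs: "vv j \<in> subdiff_c Iz (f j) xs" if j: "j \<in> {1..q}" for j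
  proof (rule pj_subdiff[OF bspec[OF Lf j]])
    show "\<forall>s. vv j \<bullet> s \<le> pj Iz (f j) xs s"
    proof
      fix s
      show "vv j \<bullet> s \<le> pj Iz (f j) xs s"
      proof (cases "\<sigma> j = 0")
        case True thus ?thesis using w0 j unfolding vv_def p_def by simp
      next
        case False
        hence sp: "\<sigma> j > 0" using s(1) j by force
        have "v j \<bullet> s \<le> \<sigma> j * p j s" using v(1) j by blast
        hence "(v j \<bullet> s) / \<sigma> j \<le> p j s" using sp by (simp add: field_simps)
        thus ?thesis using False unfolding vv_def p_def by simp
      qed
    qed
  qed
  have sv: "\<sigma> j *\<^sub>R vv j = v j" if j: "j \<in> {1..q}" for j
  proof (cases "\<sigma> j = 0")
    case True
    have "v j \<bullet> v j \<le> \<sigma> j * p j (v j)" using v(1) j by blast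
    hence "v j \<bullet> v j \<le> 0" using True by simp
    hence "v j = 0" by (meson inner_ge_zero antisym inner_eq_zero_iff)
    thus ?thesis using True unfolding vv_def by simp
  next
    case False thus ?thesis unfolding vv_def by simp
  qed
  have xi: "(\<Sum>i\<in>{1..q}. \<sigma> i *\<^sub>R vv i) = \<zeta>" 
  proof -
    have "(\<Sum>i\<in>{1..q}. \<sigma> i *\<^sub>R vv i) = (\<Sum>i\<in>{1..q}. v i)" by (rule sum.cong) (simp_all add: sv)
    thus ?thesis using v(2) by simp
  qed
  have "\<zeta> \<in> minkowski_sum_scaled q \<sigma> (\<lambda>i. subdiff_c Iz (f i) xs)"
  proof -
    have "\<forall>i\<in>{1..q}. vv i \<in> subdiff_c Iz (f i) xs" using vvs by blast
    thus ?thesis unfolding minkowski_sum_scaled_def using xi[symmetric] by blast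
  qed
  moreover have "\<forall>d\<in>dirs_c Iz l u xs. \<zeta> \<bullet> d \<ge> 0" using z(2) unfolding D_def by blast
  ultimately show ?thesis
    unfolding pareto_clarke_stationary_c_def using xs s(1,2) by blast
qed


end
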